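(* Let $\mathcal{A}\in\mathbb{C}^{I_{1\ldots N}\times I_{1\ldots N}}$ and let $\mathcal{N}\in\mathbb{C}^{I_{1\ldots N}\times I_{1\ldots N}}$ be a Hermitian positive definite tensor. Put $\tilde{\mathcal{A}}=\mathcal{N}^{1/2}*_N\mathcal{A}*_N\mathcal{N}^{-1/2}$. Then: (i) $\mathcal{A}=\mathcal{A}^{\#}_{\mathcal{N}\mathcal{N}}$ if and only if $\tilde{\mathcal{A}}=\tilde{\mathcal{A}}^H$; (ii) $\mathcal{A}*_N\mathcal{A}^{\#}_{\mathcal{N}\mathcal{N}}=\mathcal{A}^{\#}_{\mathcal{N}\mathcal{N}}*_N\mathcal{A}$ if and only if $\tilde{\mathcal{A}}*_N\tilde{\mathcal{A}}^H=\tilde{\mathcal{A}}^H*_N\tilde{\mathcal{A}}$; (iii) $\mathcal{A}^{\dagger}_{\mathcal{N},\mathcal{N}}*_N(\mathcal{A}^{\dagger}_{\mathcal{N},\mathcal{N}})^{\#}_{\mathcal{N}\mathcal{N}}=(\mathcal{A}^{\dagger}_{\mathcal{N},\mathcal{N}})^{\#}_{\mathcal{N}\mathcal{N}}*_N\mathcal{A}^{\dagger}_{\mathcal{N},\mathcal{N}}$ if and only if $\tilde{\mathcal{A}}^{\dagger}*_N(\tilde{\mathcal{A}}^{\dagger})^H=(\tilde{\mathcal{A}}^{\dagger})^H*_N\tilde{\mathcal{A}}^{\dagger}$; (iv) $\mathcal{A}*_N\mathcal{A}^{\#}_{\mathcal{N}\mathcal{N}}=\mathcal{A}^{\#}_{\mathcal{N}\mathcal{N}}*_N\mathcal{A}$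 if and only if $\mathcal{A}^{\dagger}_{\mathcal{N},\mathcal{N}}*_N(\mathcal{A}^{\dagger}_{\mathcal{N},\mathcal{N}})^{\#}_{\mathcal{N}\mathcal{N}}=(\mathcal{A}^{\dagger}_{\mathcal{N},\mathcal{N}})^{\#}_{\mathcal{N}\mathcal{N}}*_N\mathcal{A}^{\dagger}_{\mathcal{N},\mathcal{N}}$.
   Context: Write $I_{1\ldots N}$ for $I_1\times\cdots\times I_N$. Einstein product: $(\mathcal{A}*_N\mathcal{B})_{i_1\ldots i_Mj_1\ldots j_L}=\sum_{k_1,\ldots,k_N}a_{i_1\ldots i_Mk_1\ldots k_N}b_{k_1\ldots k_Nj_1\ldots j_L}$. $\mathcal{A}^H$ is the conjugate transpose (entries $\overline{a_{i_1\ldots i_Nj_1\ldots j_N}}$ at position $(j_1,\ldots,j_N,i_1,\ldots,i_N)$). Identity tensor: entry 1 where the two index blocks coincide, 0 otherwise; inverses are with respect to $*_N$. $\mathcal{N}$ is Hermitian positive definite if $\mathcal{N}^H=\mathcal{N}$ and $\mathcal{X}^H*_N\mathcal{N}*_N\mathcal{X}>0$ for all nonzero $\mathcal{X}\in\mathbb{C}^{I_{1\ldots N}}$; $\mathcal{N}^{1/2}$ is its unique Hermitian positive definite square root ($\mathcal{N}^{1/2}*_N\mathcal{N}^{1/2}=\mathcal{N}$) and $\mathcal{N}^{-1/2}=(\mathcal{N}^{1/2})^{-1}$. Weighted conjugate transpose: $\mathcal{A}^{\#}_{\mathcal{N}\mathcal{N}}=\mathcal{N}^{-1}*_N\mathcal{A}^H*_N\mathcal{N}$.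 Weighted Moore-Penrose inverse $\mathcal{A}^{\dagger}_{\mathcal{M},\mathcal{N}}$ (for Hermitian positive definite $\mathcal{M},\mathcal{N}$): the unique $\mathcal{X}$ with $\mathcal{A}*_N\mathcal{X}*_N\mathcal{A}=\mathcal{A}$, $\mathcal{X}*_N\mathcal{A}*_N\mathcal{X}=\mathcal{X}$, $(\mathcal{M}*_N\mathcal{A}*_N\mathcal{X})^H=\mathcal{M}*_N\mathcal{A}*_N\mathcal{X}$, $(\mathcal{N}*_N\mathcal{X}*_N\mathcal{A})^H=\mathcal{N}*_N\mathcal{X}*_N\mathcal{A}$; $\mathcal{A}^{\dagger}$ (Moore-Penrose inverse) is the case of identity weights. *)

theory Defs
  imports Complex_Main
begin

text \<open>Dimensions I_1,...,I_N are given by the list dims (N = length dims).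
 A tensor in C^{I_{1..N} x I_{1..N}} is a function A :: nat list => nat list => complex,
 A is js = a_{i_1..i_N j_1..j_N}, required to vanish outside the index set.\<close>

definition midx :: "nat list \<Rightarrow> nat list set" where
  "midx dims = {is. length is = length dims \<and> (\<forall>k<length dims. is ! k < dims ! k)}"

type_synonym tensor = "nat list \<Rightarrow> nat list \<Rightarrow> complex"

definition tensors :: "nat list \<Rightarrow> tensor set" where
  "tensors dims = {A. \<forall>is js. (is \<notin> midx dims \<or> js \<notin> midx dims) \<longrightarrow> A is js = 0}"

definition einstein :: "nat list \<Rightarrow> tensor \<Rightarrow> tensor \<Rightarrow> tensor" where
  "einstein dims A B = (\<lambda>is js. if is \<in> midx dims \<and> js \<in> midx dims
      then (\<Sum>ks\<in>midx dims. A is ks * B ks js) else 0)"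

definition ctrans :: "nat list \<Rightarrow> tensor \<Rightarrow> tensor" where
  "ctrans dims A = (\<lambda>is js. if is \<in> midx dims \<and> js \<in> midx dims then cnj (A js is) else 0)"

definition ident :: "nat list \<Rightarrow> tensor" where
  "ident dims = (\<lambda>is js. if is \<in> midx dims \<and> js \<in> midx dims \<and> is = js then 1 else 0)"

definition tinv :: "nat list \<Rightarrow> tensor \<Rightarrow> tensor" where
  "tinv dims A = (THE X. X \<in> tensors dims \<and> einstein dims A X = ident dims
                     \<and> einstein dims X A = ident dims)"

definition hpd :: "nat list \<Rightarrow> tensor \<Rightarrow> bool" where
  "hpd dims N \<longleftrightarrow> N \<in> tensors dims \<and> ctrans dims N = N \<and>
     (\<forall>X :: nat list \<Rightarrow> complex. (\<exists>is\<in>midx dims. X is \<noteq> 0) \<longrightarrow>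
        (let q = (\<Sum>is\<in>midx dims. \<Sum>js\<in>midx dims. cnj (X is) * N is js * X js)
         in Im q = 0 \<and> Re q > 0))"

definition tsqrt :: "nat list \<Rightarrow> tensor \<Rightarrow> tensor" where
  "tsqrt dims N = (THE S. hpd dims S \<and> einstein dims S S = N)"

definition tsqrt_inv :: "nat list \<Rightarrow> tensor \<Rightarrow> tensor" where
  "tsqrt_inv dims N = tinv dims (tsqrt dims N)"

definition wctrans :: "nat list \<Rightarrow> tensor \<Rightarrow> tensor \<Rightarrow> tensor" where
  "wctrans dims N A = einstein dims (einstein dims (tinv dims N) (ctrans dims A)) N"

definition wmp :: "nat list \<Rightarrow> tensor \<Rightarrow> tensor \<Rightarrow> tensor \<Rightarrow> tensor" where
  "wmp dims M N A = (THE X. X \<in> tensors dims \<and>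
      einstein dims (einstein dims A X) A = A \<and>
      einstein dims (einstein dims X A) X = X \<and>
      ctrans dims (einstein dims M (einstein dims A X)) = einstein dims M (einstein dims A X) \<and>
      ctrans dims (einstein dims N (einstein dims X A)) = einstein dims N (einstein dims X A))"

definition mp :: "nat list \<Rightarrow> tensor \<Rightarrow> tensor" where
  "mp dims A = wmp dims (ident dims) (ident dims) A"

end

theory Submission
  imports Defs "HOL-Library.Function_Algebras" "HOL-Computational_Algebra.Fundamental_Theorem_Algebra"
begin


declare plus_fun_apply[simp del] zero_fun_apply[simp del]

definition tsc :: "complex \<Rightarrow> tensor \<Rightarrow> tensor" where
  "tsc c A = (\<lambda>i j. c * A i j)"

lemma fun_add_app: "(A + B) i j = A i j + (B :: tensor) i j"
  by (simp add: plus_fun_def)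
lemma fun_diff_app: "(A - B) i j = A i j - (B :: tensor) i j"
  by (simp add: fun_diff_def)
lemma fun_zero_app: "(0 :: tensor) i j = 0"
  by (simp add: zero_fun_def)
lemma fun_uminus_app: "(- A) i j = - (A :: tensor) i j"
  by (simp add: fun_Compl_def)
lemma tsc_app: "tsc c A i j = c * A i j"
  by (simp add: tsc_def)

lemmas app_simps = fun_add_app fun_diff_app fun_zero_app fun_uminus_app tsc_app

lemma finite_midx[simp]: "finite (midx d)"
proof -
  have "midx d \<subseteq> {xs. set xs \<subseteq> {..sum_list d} \<and> length xs = length d}"
  proof
    fix xs assume "xs \<in> midx d"
    then have l: "length xs = length d" and b: "\<forall>k<length d. xs ! k < d ! k"
      by (auto simp: app_simps midx_def)
    have "set xs \<subseteq> {..sum_list d}"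
    proof
      fix x assume "x \<in> set xs"
      then obtain k where "k < length xs" "x = xs ! k" by (auto simp: app_simps in_set_conv_nth)
      with l b elem_le_sum_list[of k d] show "x \<in> {..sum_list d}" by force
    qed
    with l show "xs \<in> {xs. set xs \<subseteq> {..sum_list d} \<and> length xs = length d}" by auto
  qed
  moreover have "finite {xs. set xs \<subseteq> {..sum_list d} \<and> length xs = length d}"
    by (rule finite_lists_length_eq) auto
  ultimately show ?thesis by (rule finite_subset)
qed

interpretation tv: vector_space tsc
  by unfold_locales (auto simp: app_simps fun_eq_iff algebra_simps)

lemma sum_app: "(\<Sum>x\<in>S. f x) i j = (\<Sum>x\<in>S. (f x :: tensor) i j)"
  by (induct S rule: infinite_finite_induct) (auto simp: app_simps)


lemma poly_prod_lin: "poly (\<Prod>s\<leftarrow>rs. [:-s, 1:]) x = (\<Prod>s\<leftarrow>rs. x - (s::complex))"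
  by (induct rs) (auto simp: algebra_simps)

lemma prod_dvd_roots:
  "distinct rs \<Longrightarrow> \<forall>r\<in>set rs. poly p r = 0 \<Longrightarrow> (\<Prod>r\<leftarrow>rs. [:-r, 1:]) dvd (p :: complex poly)"
proof (induct rs arbitrary: p)
  case Nil then show ?case by simp
next
  case (Cons r rs)
  have "[:-r, 1:] dvd p" using Cons.prems(2) poly_eq_0_iff_dvd by auto
  then obtain q where q: "p = [:-r, 1:] * q" by (elim dvdE)
  have "\<forall>s\<in>set rs. poly q s = 0"
  proof
    fix s assume s: "s \<in> set rs"
    then have "s \<noteq> r" using Cons.prems(1) by auto
    moreover have "poly p s = 0" using Cons.prems(2) s by auto
    ultimately show "poly q s = 0" using q by simp
  qed
  then have "(\<Prod>r\<leftarrow>rs. [:-r, 1:]) dvd q" using Cons.hyps Cons.prems(1) by auto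
  then have "[:-r, 1:] * (\<Prod>r\<leftarrow>rs. [:-r, 1:]) dvd [:-r, 1:] * q" by (rule mult_dvd_mono[OF dvd_refl])
  then show ?case unfolding q by (simp only: list.map prod_list.Cons)
qed

lemma interp: "distinct rs \<Longrightarrow> \<exists>p. \<forall>r\<in>set rs. poly p r = (f r :: complex)"
proof (induct rs)
  case Nil then show ?case by simp
next
  case (Cons r rs)
  then obtain p where p: "\<forall>r\<in>set rs. poly p r = f r" by auto
  define q where "q = (\<Prod>s\<leftarrow>rs. [:-s, 1:])"
  have q0: "poly q s = 0" if "s \<in> set rs" for s
    unfolding q_def poly_prod_lin using that by (induct rs) auto
  have qr: "poly q r \<noteq> 0"
    unfolding q_def poly_prod_lin using Cons.prems by (induct rs) auto
  define c where "c = (f r - poly p r) / poly q r"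
  have "\<forall>x\<in>set (r # rs). poly (p + smult c q) x = f x"
    using p q0 qr by (auto simp: c_def)
  then show ?case by blast
qed

context fixes d :: "nat list"
begin

abbreviation KK where "KK \<equiv> midx d"
abbreviation TT where "TT \<equiv> tensors d"
abbreviation mul (infixl "\<odot>" 70) where "A \<odot> B \<equiv> einstein d A B"
abbreviation II where "II \<equiv> ident d"
abbreviation ct where "ct A \<equiv> ctrans d A"

lemma tensorsI: "(\<And>i j. i \<notin> KK \<or> j \<notin> KK \<Longrightarrow> A i j = 0) \<Longrightarrow> A \<in> TT"
  by (auto simp: app_simps tensors_def)

lemma tensorsD: "A \<in> TT \<Longrightarrow> i \<notin> KK \<or> j \<notin> KK \<Longrightarrow> A i j = 0"
  by (auto simp: app_simps tensors_def)

lemma tensor_eqI: "A \<in> TT \<Longrightarrow> B \<in> TT \<Longrightarrow> (\<And>i j. i \<in> KK \<Longrightarrow> j \<in> KK \<Longrightarrow> A i j = B i j) \<Longrightarrow> A = B"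
  by (rule ext, rule ext) (metis tensorsD)

lemma mul_T[simp]: "A \<odot> B \<in> TT"
  by (rule tensorsI) (auto simp: app_simps einstein_def)
lemma ct_T[simp]: "ct A \<in> TT"
  by (rule tensorsI) (auto simp: app_simps ctrans_def)
lemma Id_T[simp]: "II \<in> TT"
  by (rule tensorsI) (auto simp: app_simps ident_def)
lemma zero_T[simp]: "(0::tensor) \<in> TT"
  by (rule tensorsI) (auto simp: app_simps)
lemma add_T[simp]: "A \<in> TT \<Longrightarrow> B \<in> TT \<Longrightarrow> A + B \<in> TT"
  by (rule tensorsI) (auto simp: app_simps tensorsD)
lemma diff_T[simp]: "A \<in> TT \<Longrightarrow> B \<in> TT \<Longrightarrow> A - B \<in> TT"
  by (rule tensorsI) (auto simp: app_simps tensorsD)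
lemma tsc_T[simp]: "A \<in> TT \<Longrightarrow> tsc c A \<in> TT"
  by (rule tensorsI) (auto simp: app_simps tensorsD)

lemma mul_app: "i \<in> KK \<Longrightarrow> j \<in> KK \<Longrightarrow> (A \<odot> B) i j = (\<Sum>k\<in>KK. A i k * B k j)"
  by (simp add: app_simps einstein_def)
lemma ct_app: "i \<in> KK \<Longrightarrow> j \<in> KK \<Longrightarrow> ct A i j = cnj (A j i)"
  by (simp add: app_simps ctrans_def)

lemma mul_assoc: "(A \<odot> B) \<odot> C = A \<odot> (B \<odot> C)"
proof (rule tensor_eqI[OF mul_T mul_T])
  fix i j assume i: "i \<in> KK" and j: "j \<in> KK"
  have "((A \<odot> B) \<odot> C) i j = (\<Sum>k\<in>KK. \<Sum>l\<in>KK. A i l * B l k * C k j)"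
    using i j by (simp add: app_simps mul_app sum_distrib_right)
  also have "\<dots> = (\<Sum>l\<in>KK. \<Sum>k\<in>KK. A i l * B l k * C k j)"
    by (rule sum.swap)
  also have "\<dots> = (A \<odot> (B \<odot> C)) i j"
    using i j by (simp add: app_simps mul_app sum_distrib_left mult.assoc)
  finally show "((A \<odot> B) \<odot> C) i j = (A \<odot> (B \<odot> C)) i j" .
qed

lemma Id_left[simp]: "A \<in> TT \<Longrightarrow> II \<odot> A = A"
proof (rule tensor_eqI[OF mul_T])
  fix i j assume "i \<in> KK" "j \<in> KK"
  then have "(II \<odot> A) i j = (\<Sum>k\<in>KK. (if i = k then A k j else 0))"
    unfolding mul_app[OF \<open>i \<in> KK\<close> \<open>j \<in> KK\<close>] by (intro sum.cong) (auto simp: app_simps ident_def)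
  also have "\<dots> = A i j" using \<open>i \<in> KK\<close> by simp
  finally show "(II \<odot> A) i j = A i j" .
qed

lemma Id_right[simp]: "A \<in> TT \<Longrightarrow> A \<odot> II = A"
proof (rule tensor_eqI[OF mul_T])
  fix i j assume "i \<in> KK" "j \<in> KK"
  then have "(A \<odot> II) i j = (\<Sum>k\<in>KK. (if k = j then A i k else 0))"
    unfolding mul_app[OF \<open>i \<in> KK\<close> \<open>j \<in> KK\<close>] by (intro sum.cong) (auto simp: app_simps ident_def)
  also have "\<dots> = A i j" using \<open>j \<in> KK\<close> by simp
  finally show "(A \<odot> II) i j = A i j" .
qed

lemma ct_ct[simp]: "A \<in> TT \<Longrightarrow> ct (ct A) = A"
  by (rule tensor_eqI) (auto simp: app_simps ct_app)

lemma ct_mul: "ct (A \<odot> B) = ct B \<odot> ct A"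
  by (rule tensor_eqI) (auto simp: app_simps ct_app mul_app mult.commute)

lemma ct_Id[simp]: "ct II = II"
  by (rule tensor_eqI[OF ct_T Id_T]) (auto simp: app_simps ct_app ident_def)

lemma ct_add: "ct (A + B) = ct A + ct B"
  by (rule ext, rule ext) (simp add: app_simps ctrans_def)
lemma ct_diff: "ct (A - B) = ct A - ct B"
  by (rule ext, rule ext) (simp add: app_simps ctrans_def)
lemma ct_tsc: "ct (tsc c A) = tsc (cnj c) (ct A)"
  by (rule ext, rule ext) (simp add: app_simps ctrans_def)
lemma ct_zero[simp]: "ct 0 = 0"
  by (rule ext, rule ext) (simp add: app_simps ctrans_def)

lemma mul_add_left: "(A + B) \<odot> C = A \<odot> C + B \<odot> C"
  by (rule ext, rule ext) (simp add: app_simps einstein_def sum.distrib distrib_right)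
lemma mul_add_right: "C \<odot> (A + B) = C \<odot> A + C \<odot> B"
  by (rule ext, rule ext) (simp add: app_simps einstein_def sum.distrib distrib_left)
lemma mul_diff_left: "(A - B) \<odot> C = A \<odot> C - B \<odot> C"
  by (rule ext, rule ext) (simp add: app_simps einstein_def sum_subtractf left_diff_distrib)
lemma mul_diff_right: "C \<odot> (A - B) = C \<odot> A - C \<odot> B"
  by (rule ext, rule ext) (simp add: app_simps einstein_def sum_subtractf right_diff_distrib)
lemma mul_tsc_left: "tsc c A \<odot> B = tsc c (A \<odot> B)"
  by (rule ext, rule ext) (simp add: app_simps einstein_def sum_distrib_left mult.assoc)
lemma mul_tsc_right: "B \<odot> tsc c A = tsc c (B \<odot> A)"
  by (rule ext, rule ext) (simp add: app_simps einstein_def sum_distrib_left mult.assoc mult.left_commute)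
lemma mul_zero_left[simp]: "0 \<odot> A = 0"
  by (rule ext, rule ext) (simp add: app_simps einstein_def)
lemma mul_zero_right[simp]: "A \<odot> 0 = 0"
  by (rule ext, rule ext) (simp add: app_simps einstein_def)

lemma tsc_add: "tsc c (A + B) = tsc c A + tsc c B"
  by (rule ext, rule ext) (simp add: app_simps distrib_left)
lemma tsc_add2: "tsc (a + b) A = tsc a A + tsc b A"
  by (rule ext, rule ext) (simp add: app_simps distrib_right)
lemma tsc_tsc: "tsc a (tsc b A) = tsc (a * b) A"
  by (rule ext, rule ext) (simp add: app_simps)
lemma tsc_one[simp]: "tsc 1 A = A"
  by (rule ext, rule ext) (simp add: app_simps)
lemma tsc_zero[simp]: "tsc 0 A = 0"
  by (rule ext, rule ext) (simp add: app_simps)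
lemma tsc_zero2[simp]: "tsc c 0 = 0"
  by (rule ext, rule ext) (simp add: app_simps)

definition qf :: "tensor \<Rightarrow> (nat list \<Rightarrow> complex) \<Rightarrow> complex" where
  "qf H v = (\<Sum>i\<in>KK. \<Sum>j\<in>KK. cnj (v i) * H i j * v j)"

definition nr :: "(nat list \<Rightarrow> complex) \<Rightarrow> real" where
  "nr v = (\<Sum>i\<in>KK. (cmod (v i))\<^sup>2)"

definition injq :: "tensor \<Rightarrow> bool" where
  "injq H \<longleftrightarrow> (\<forall>v. (\<exists>i\<in>KK. v i \<noteq> 0) \<longrightarrow> qf H v \<noteq> 0)"

definition posq :: "tensor \<Rightarrow> bool" where
  "posq H \<longleftrightarrow> (\<forall>v. (\<exists>i\<in>KK. v i \<noteq> 0) \<longrightarrow> 0 < Re (qf H v))"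

definition herm :: "tensor \<Rightarrow> bool" where
  "herm H \<longleftrightarrow> H \<in> TT \<and> ct H = H"

definition eig :: "tensor \<Rightarrow> complex \<Rightarrow> bool" where
  "eig H r \<longleftrightarrow> \<not> (\<forall>X\<in>TT. (H - tsc r II) \<odot> X = 0 \<longrightarrow> X = 0)"

lemma nr_pos: assumes "\<exists>i\<in>KK. v i \<noteq> 0" shows "nr v > 0"
proof -
  obtain i where i: "i \<in> KK" "v i \<noteq> 0" using assms by blast
  show ?thesis unfolding nr_def
    by (rule sum_pos2[OF finite_midx i(1)]) (use i(2) in auto)
qed

lemma nr_nonneg: "nr v \<ge> 0"
  unfolding nr_def by (rule sum_nonneg) auto

lemma qf_Id: "qf II v = of_real (nr v)"
proof -
  have "qf II v = (\<Sum>i\<in>KK. \<Sum>j\<in>KK. if i = j then cnj (v i) * v i else 0)"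
    unfolding qf_def by (intro sum.cong) (auto simp: app_simps ident_def)
  also have "\<dots> = (\<Sum>i\<in>KK. cnj (v i) * v i)" by simp
  also have "\<dots> = (\<Sum>i\<in>KK. of_real ((cmod (v i))\<^sup>2))"
    by (intro sum.cong refl) (metis complex_norm_square mult.commute of_real_power)
  finally show ?thesis by (simp add: app_simps nr_def)
qed

lemma qf_add: "qf (A + B) v = qf A v + qf B v"
  by (simp add: app_simps qf_def sum.distrib distrib_left distrib_right)
lemma qf_diff: "qf (A - B) v = qf A v - qf B v"
  by (simp add: app_simps qf_def sum_subtractf right_diff_distrib left_diff_distrib)
lemma qf_tsc: "qf (tsc c A) v = c * qf A v"
  by (simp add: app_simps qf_def sum_distrib_left mult.assoc mult.left_commute)

lemma qf_shift: "qf (H - tsc r II) v = qf H v - r * of_real (nr v)"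
  by (simp add: app_simps qf_diff qf_tsc qf_Id)

lemma qf_alt: "qf H v = (\<Sum>i\<in>KK. cnj (v i) * (\<Sum>j\<in>KK. H i j * v j))"
  by (simp add: app_simps qf_def sum_distrib_left mult.assoc)

lemma injqD: "injq H \<Longrightarrow> \<exists>i\<in>KK. v i \<noteq> 0 \<Longrightarrow> qf H v \<noteq> 0"
  unfolding injq_def by blast

lemma injq_inj: assumes "injq H" "X \<in> TT" "H \<odot> X = 0" shows "X = 0"
proof (rule tensor_eqI[OF assms(2) zero_T])
  fix i j assume i: "i \<in> KK" and j: "j \<in> KK"
  show "X i j = 0 i j"
  proof (rule ccontr)
    assume "X i j \<noteq> 0 i j"
    then have ne: "\<exists>i\<in>KK. (\<lambda>k. X k j) i \<noteq> 0" using i by (auto simp: app_simps)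
    have "qf H (\<lambda>k. X k j) = (\<Sum>i\<in>KK. cnj (X i j) * (H \<odot> X) i j)"
      unfolding qf_alt by (intro sum.cong refl) (simp add: app_simps mul_app j)
    also have "\<dots> = 0" using assms(3) by (simp add: app_simps)
    finally show False using injqD[OF assms(1) ne] by simp
  qed
qed

lemma posq_injq: "posq H \<Longrightarrow> injq H"
  unfolding posq_def injq_def by force

lemma posq_add: "posq A \<Longrightarrow> posq B \<Longrightarrow> posq (A + B)"
  unfolding posq_def by (simp add: app_simps qf_add add_pos_pos)

lemma hpd_posq: assumes "hpd d H" shows "posq H"
  unfolding posq_def
proof (intro allI impI)
  fix v :: "nat list \<Rightarrow> complex" assume ne: "\<exists>i\<in>KK. v i \<noteq> 0"
  have "\<forall>X :: nat list \<Rightarrow> complex. (\<exists>is\<in>KK. X is \<noteq> 0) \<longrightarrow>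
        (let q = qf H X in Im q = 0 \<and> Re q > 0)"
    using conjunct2[OF conjunct2[OF assms[unfolded hpd_def]]] unfolding qf_def .
  then have "let q = qf H v in Im q = 0 \<and> Re q > 0" using ne by blast
  then show "0 < Re (qf H v)" by (simp add: app_simps Let_def)
qed

lemma hpd_herm: "hpd d H \<Longrightarrow> herm H"
  unfolding hpd_def herm_def by blast

lemma herm_qf_real: assumes "herm H" shows "cnj (qf H v) = qf H v"
proof -
  have h: "\<And>i j. i \<in> KK \<Longrightarrow> j \<in> KK \<Longrightarrow> cnj (H i j) = H j i"
  proof -
    fix i j assume "i \<in> KK" "j \<in> KK"
    then have "ct H j i = cnj (H i j)" by (simp add: app_simps ct_app)
    then show "cnj (H i j) = H j i" using assms unfolding herm_def by simp
  qed
  have "cnj (qf H v) = (\<Sum>i\<in>KK. \<Sum>j\<in>KK. v i * H j i * cnj (v j))"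
    unfolding qf_def by (simp add: app_simps h)
  also have "\<dots> = (\<Sum>j\<in>KK. \<Sum>i\<in>KK. v i * H j i * cnj (v j))"
    by (rule sum.swap)
  also have "\<dots> = qf H v" unfolding qf_def by (simp add: app_simps mult.commute mult.left_commute)
  finally show ?thesis .
qed

lemma herm_Im_qf: assumes "herm H" shows "Im (qf H v) = 0"
proof -
  have "Im (cnj (qf H v)) = Im (qf H v)" using herm_qf_real[OF assms] by simp
  then show ?thesis by simp
qed

lemma nonreal_injq: assumes "herm H" "Im r \<noteq> 0" shows "injq (H - tsc r II)"
  unfolding injq_def
proof (intro allI impI)
  fix v :: "nat list \<Rightarrow> complex" assume "\<exists>i\<in>KK. v i \<noteq> 0"
  then have p: "nr v > 0" by (rule nr_pos)
  have "Im (qf (H - tsc r II) v) = - Im r * nr v"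
    by (simp add: app_simps qf_shift herm_Im_qf[OF assms(1)])
  then show "qf (H - tsc r II) v \<noteq> 0" using p assms(2) by auto
qed

lemma eig_real: assumes "herm H" "eig H r" shows "Im r = 0"
proof (rule ccontr)
  assume "Im r \<noteq> 0"
  then have "injq (H - tsc r II)" by (rule nonreal_injq[OF assms(1)])
  then have "\<forall>X\<in>TT. (H - tsc r II) \<odot> X = 0 \<longrightarrow> X = 0" using injq_inj by blast
  then show False using assms(2) unfolding eig_def by blast
qed

lemma eig_pos: assumes "posq H" "eig H r" shows "Re r > 0"
proof (rule ccontr)
  assume a: "\<not> Re r > 0"
  have "injq (H - tsc r II)" unfolding injq_def
  proof (intro allI impI)
    fix v :: "nat list \<Rightarrow> complex" assume "\<exists>i\<in>KK. v i \<noteq> 0"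
    then have "0 < Re (qf H v)" using assms(1) unfolding posq_def by blast
    moreover have "Re (qf (H - tsc r II) v) = Re (qf H v) - Re r * nr v"
      by (simp add: app_simps qf_shift)
    moreover have "Re r * nr v \<le> 0" using a nr_nonneg[of v]
      by (simp add: app_simps mult_nonpos_nonneg)
    ultimately show "qf (H - tsc r II) v \<noteq> 0" by auto
  qed
  then have "\<forall>X\<in>TT. (H - tsc r II) \<odot> X = 0 \<longrightarrow> X = 0" using injq_inj by blast
  then show False using assms(2) unfolding eig_def by blast
qed

lemma ctM_M_zero: assumes "M \<in> TT" "ct M \<odot> M = 0" shows "M = 0"
proof (rule tensor_eqI[OF assms(1) zero_T])
  fix i j assume i: "i \<in> KK" and j: "j \<in> KK"
  have "(ct M \<odot> M) j j = (\<Sum>k\<in>KK. of_real ((cmod (M k j))\<^sup>2))"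
    unfolding mul_app[OF j j]
    by (intro sum.cong refl) (simp add: app_simps ct_app j, metis complex_norm_square mult.commute of_real_power)
  then have "(\<Sum>k\<in>KK. (cmod (M k j))\<^sup>2) = 0" using assms(2)
    by (metis fun_zero_app of_real_eq_0_iff of_real_sum)
  then have "\<forall>k\<in>KK. (cmod (M k j))\<^sup>2 = 0" by (subst (asm) sum_nonneg_eq_0_iff) auto
  then show "M i j = 0 i j" using i by (simp add: app_simps)
qed

lemma ct_shift: assumes "herm H" "Im r = 0" shows "ct (H - tsc r II) = H - tsc r II"
proof -
  have "cnj r = r" using assms(2) by (simp add: app_simps complex_eq_iff)
  then show ?thesis using assms(1) unfolding herm_def by (simp add: app_simps ct_diff ct_tsc)
qed

lemma sq_inj: assumes "herm H" "Im r = 0" "Y \<in> TT"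
  and "(H - tsc r II) \<odot> ((H - tsc r II) \<odot> Y) = 0"
  shows "(H - tsc r II) \<odot> Y = 0"
proof (rule ctM_M_zero)
  have hh: "H \<in> TT" using assms(1) herm_def by blast
  have "ct ((H - tsc r II) \<odot> Y) \<odot> ((H - tsc r II) \<odot> Y)
      = ct Y \<odot> ((H - tsc r II) \<odot> ((H - tsc r II) \<odot> Y))"
    by (simp add: app_simps ct_mul ct_shift[OF assms(1,2)] mul_assoc)
  then show "ct ((H - tsc r II) \<odot> Y) \<odot> ((H - tsc r II) \<odot> Y) = 0" using assms(4) by simp
qed simp

definition hev :: "tensor \<Rightarrow> complex poly \<Rightarrow> tensor" where
  "hev H p = fold_coeffs (\<lambda>a M. tsc a II + H \<odot> M) p 0"

lemma hev_0[simp]: "hev H 0 = 0"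
  by (simp add: hev_def)

lemma hev_pCons: "hev H (pCons a p) = tsc a II + H \<odot> hev H p"
proof (cases "p = 0 \<and> a = 0")
  case True then show ?thesis by (simp add: hev_def)
next
  case False
  then have "p \<noteq> 0 \<or> a \<noteq> 0" by auto
  then show ?thesis by (auto simp: hev_def)
qed

lemma hev_T[simp]: "hev H p \<in> TT"
proof (induct p)
  case 0 show ?case unfolding hev_0 by (rule zero_T)
next
  case (pCons a p) show ?case unfolding hev_pCons by (intro add_T tsc_T Id_T mul_T)
qed

lemma hev_add: "hev H (p + q) = hev H p + hev H q"
proof (induct p arbitrary: q rule: pCons_induct)
  case 0 then show ?case by simp
next
  case (pCons a p)
  show ?case
  proof (cases q rule: pCons_cases)
    case (pCons b q')
    show ?thesis unfolding pCons add_pCons hev_pCons pCons.hyps(2) mul_add_right tsc_add2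
      by (simp add: algebra_simps)
  qed
qed

lemma hev_smult: "hev H (smult c p) = tsc c (hev H p)"
proof (induct p)
  case 0 show ?case by simp
next
  case (pCons a p) show ?case
    unfolding smult_pCons hev_pCons pCons.hyps(2) tsc_add tsc_tsc mul_tsc_right ..
qed

lemma hev_diff: "hev H (p - q) = hev H p - hev H q"
proof -
  have "hev H p = hev H ((p - q) + q)" by simp
  also have "\<dots> = hev H (p - q) + hev H q" by (rule hev_add)
  finally show ?thesis by (simp add: algebra_simps)
qed

lemma hev_sum: "hev H (\<Sum>x\<in>S. f x) = (\<Sum>x\<in>S. hev H (f x))"
  by (induct S rule: infinite_finite_induct) (auto simp: hev_add)

lemma hev_mult: assumes "H \<in> TT" shows "hev H (p * q) = hev H p \<odot> hev H q"
proof (induct p)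
  case 0 then show ?case by simp
next
  case (pCons a p)
  have "hev H (pCons a p * q) = tsc a (hev H q) + H \<odot> (hev H p \<odot> hev H q)"
    by (simp add: hev_add hev_smult hev_pCons pCons.hyps(2))
  also have "\<dots> = hev H (pCons a p) \<odot> hev H q"
    by (simp add: hev_pCons mul_add_left mul_tsc_left mul_assoc)
  finally show ?case .
qed

lemma hev_const: "hev H [:c:] = tsc c II"
  by (simp add: hev_pCons)

lemma hev_one: "hev H 1 = II"
  by (simp add: one_pCons hev_pCons)

lemma hev_lin: assumes "H \<in> TT" shows "hev H [:-r, 1:] = H - tsc r II"
proof -
  have "hev H [:-r, 1:] = tsc (-r) II + H" using assms by (simp add: hev_pCons)
  also have "\<dots> = H - tsc r II" by (simp add: fun_eq_iff)
  finally show ?thesis .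
qed

lemma hev_X: assumes "H \<in> TT" shows "hev H [:0, 1:] = H"
  using hev_lin[OF assms, of 0] by (simp add: fun_eq_iff)

lemma hev_comm: assumes "H \<in> TT" "X \<in> TT" "X \<odot> H = H \<odot> X"
  shows "X \<odot> hev H p = hev H p \<odot> X"
proof (induct p)
  case 0 then show ?case by simp
next
  case (pCons a p)
  have c: "X \<odot> (H \<odot> hev H p) = H \<odot> (hev H p \<odot> X)"
    by (simp only: assms(3) mul_assoc[symmetric]) (simp only: mul_assoc pCons.hyps(2))
  have "X \<odot> hev H (pCons a p) = tsc a X + H \<odot> (hev H p \<odot> X)"
    using assms c by (simp add: hev_pCons mul_add_right mul_tsc_right)
  also have "\<dots> = hev H (pCons a p) \<odot> X"
    using assms by (simp add: hev_pCons mul_add_left mul_tsc_left mul_assoc)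
  finally show ?case .
qed

lemma hev_commH: "H \<in> TT \<Longrightarrow> H \<odot> hev H p = hev H p \<odot> H"
  by (rule hev_comm) auto

lemma hev_comm2: "H \<in> TT \<Longrightarrow> hev H p \<odot> hev H q = hev H q \<odot> hev H p"
  by (metis hev_mult mult.commute)

lemma hev_ct: assumes "herm H" shows "ct (hev H p) = hev H (map_poly cnj p)"
proof (induct p)
  case 0 then show ?case by simp
next
  case (pCons a p)
  have HT: "H \<in> TT" and Hc: "ct H = H" using assms by (auto simp: herm_def)
  have "ct (hev H (pCons a p)) = tsc (cnj a) II + hev H (map_poly cnj p) \<odot> H"
    by (simp add: hev_pCons ct_add ct_tsc ct_mul Hc pCons.hyps(2))
  also have "\<dots> = hev H (map_poly cnj (pCons a p))"
    by (simp add: map_poly_pCons hev_pCons hev_commH[OF HT])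
  finally show ?case .
qed

lemma prod_remove1: "r \<in> set rs \<Longrightarrow> (\<Prod>x\<leftarrow>rs. f x) = f r * (\<Prod>x\<leftarrow>remove1 r rs. (f x :: 'a :: comm_monoid_mult))"
  by (induct rs) (auto simp: mult.left_commute)

lemma reduce:
  assumes "herm H" "M \<in> TT" "hev H (\<Prod>r\<leftarrow>rs. [:-r, 1:]) \<odot> M = 0"
  shows "\<exists>rs'. distinct rs' \<and> (\<forall>r\<in>set rs'. Im r = 0 \<and> eig H r) \<and>
               hev H (\<Prod>r\<leftarrow>rs'. [:-r, 1:]) \<odot> M = 0"
  using assms(2,3)
proof (induct rs arbitrary: M)
  case Nil
  then show ?case by (intro exI[of _ "[]"]) (simp add: hev_one)
next
  case (Cons r rs0)
  have HT: "H \<in> TT" using assms(1) by (simp add: herm_def)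
  define L where "L = H - tsc r II"
  have L: "L = hev H [:-r, 1:]" using hev_lin[OF HT] L_def by simp
  define P0 where "P0 = hev H (\<Prod>r\<leftarrow>rs0. [:-r, 1:])"
  have e: "hev H (\<Prod>x\<leftarrow>r # rs0. [:-x, 1:]) = L \<odot> P0"
    unfolding list.map prod_list.Cons hev_mult[OF HT] L P0_def ..
  have "(L \<odot> P0) \<odot> M = 0" using Cons.prems(2) by (simp only: e)
  then have "P0 \<odot> (L \<odot> M) = 0" by (simp add: L P0_def hev_comm2[OF HT] mul_assoc[symmetric])
  then obtain rs0' where d: "distinct rs0'" and e: "\<forall>r\<in>set rs0'. Im r = 0 \<and> eig H r"
    and z: "hev H (\<Prod>r\<leftarrow>rs0'. [:-r, 1:]) \<odot> (L \<odot> M) = 0"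
    using Cons.hyps[of "L \<odot> M"] P0_def by auto
  define P0' where "P0' = hev H (\<Prod>r\<leftarrow>rs0'. [:-r, 1:])"
  have z2: "L \<odot> (P0' \<odot> M) = 0" using z
    by (simp add: L P0'_def hev_comm2[OF HT] mul_assoc[symmetric])
  show ?case
  proof (cases "eig H r")
    case False
    then have "P0' \<odot> M = 0" using z2 unfolding eig_def L_def by auto
    then show ?thesis using d e P0'_def by blast
  next
    case True
    have ir: "Im r = 0" by (rule eig_real[OF assms(1) True])
    show ?thesis
    proof (cases "r \<in> set rs0'")
      case True
      define P1 where "P1 = hev H (\<Prod>r\<leftarrow>remove1 r rs0'. [:-r, 1:])"
      have "P0' = L \<odot> P1" unfolding P0'_def P1_def L prod_remove1[OF True] hev_mult[OF HT] ..
      then have "L \<odot> (L \<odot> (P1 \<odot> M)) = 0" using z2 by (simp add: mul_assoc)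
      then have "L \<odot> (P1 \<odot> M) = 0" unfolding L_def by (rule sq_inj[OF assms(1) ir mul_T])
      then have "P0' \<odot> M = 0" using \<open>P0' = L \<odot> P1\<close> by (simp add: mul_assoc)
      then show ?thesis using d e P0'_def by blast
    next
      case False
      have "hev H (\<Prod>r\<leftarrow>r # rs0'. [:-r, 1:]) \<odot> M = L \<odot> (P0' \<odot> M)"
        unfolding list.map prod_list.Cons hev_mult[OF HT] L P0'_def mul_assoc ..
      then show ?thesis using z2 d e False True ir
        by (intro exI[of _ "r # rs0'"]) auto
    qed
  qed
qed

lemma tensor_span: assumes "A \<in> TT"
  shows "A \<in> tv.span ((\<lambda>(a, b). (\<lambda>i j. if i = a \<and> j = b then 1 else 0)) ` (KK \<times> KK))"
    (is "_ \<in> tv.span ?E")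
proof -
  have "A = (\<Sum>(a, b)\<in>KK \<times> KK. tsc (A a b) (\<lambda>i j. if i = a \<and> j = b then 1 else 0))"
  proof (intro ext)
    fix i j
    have "(\<Sum>(a, b)\<in>KK \<times> KK. tsc (A a b) (\<lambda>i j. if i = a \<and> j = b then 1 else 0)) i j
        = (\<Sum>x\<in>KK \<times> KK. if x = (i, j) then A i j else 0)"
      unfolding sum_app by (intro sum.cong refl) (auto simp: app_simps split: if_splits)
    also have "\<dots> = A i j" using assms by (auto simp: tensorsD)
    finally show "A i j = (\<Sum>(a, b)\<in>KK \<times> KK. tsc (A a b) (\<lambda>i j. if i = a \<and> j = b then 1 else 0)) i j" by simp
  qed
  also have "\<dots> \<in> tv.span ?E"
  proof (intro tv.span_sum)
    fix x assume "x \<in> KK \<times> KK"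
    then obtain a b where ab: "x = (a, b)" "a \<in> KK" "b \<in> KK" by auto
    have "(\<lambda>i j. if i = a \<and> j = b then 1 else 0) \<in> ?E"
      by (rule rev_image_eqI[of "(a, b)"]) (use ab in auto)
    then show "(case x of (a, b) \<Rightarrow> tsc (A a b) (\<lambda>i j. if i = a \<and> j = b then 1 else 0)) \<in> tv.span ?E"
      unfolding ab(1) prod.case by (intro tv.span_scale tv.span_base)
  qed
  finally show ?thesis .
qed

lemma annih: assumes "H \<in> TT" shows "\<exists>p. p \<noteq> 0 \<and> hev H p = 0"
proof -
  define n where "n = card KK"
  define E where "E = (\<lambda>(a, b). (\<lambda>i j. if i = a \<and> j = b then (1::complex) else 0)) ` (KK \<times> KK)"
  define pw where "pw k = hev H (monom 1 k)" for k
  have fE: "finite E" unfolding E_def by simp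
  have "card E \<le> card (KK \<times> KK)" unfolding E_def by (rule card_image_le) simp
  then have cE: "card E \<le> n * n" unfolding n_def card_cartesian_product .
  have hm: "hev H (monom c k) = tsc c (pw k)" for c k
  proof -
    have "monom c k = smult c (monom 1 k)" by (simp add: smult_monom)
    then show ?thesis unfolding pw_def by (simp only: hev_smult)
  qed
  show ?thesis
  proof (cases "inj_on pw {0..n*n}")
    case True
    define S where "S = pw ` {0..n*n}"
    have cS: "card S = n * n + 1" unfolding S_def using card_image[OF True] by simp
    have sub: "S \<subseteq> tv.span E" unfolding S_def
    proof (rule image_subsetI)
      fix k show "pw k \<in> tv.span E" unfolding pw_def E_def by (rule tensor_span[OF hev_T])
    qed
    have dep: "tv.dependent S"
    proof (rule ccontr)
      assume ind: "tv.independent S"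
      have "card S \<le> card E" by (rule conjunct2[OF tv.independent_span_bound[OF fE ind sub]])
      then show False using cS cE by simp
    qed
    have fS: "finite S" unfolding S_def by simp
    obtain u where u1: "\<exists>v\<in>S. u v \<noteq> 0" and u2: "(\<Sum>v\<in>S. tsc (u v) v) = 0"
      using dep unfolding tv.dependent_finite[OF fS] by blast
    define p where "p = (\<Sum>k\<in>{0..n*n}. monom (u (pw k)) k)"
    have "hev H p = (\<Sum>k\<in>{0..n*n}. tsc (u (pw k)) (pw k))"
      unfolding p_def hev_sum hm ..
    also have "\<dots> = (\<Sum>v\<in>S. tsc (u v) v)"
      unfolding S_def by (rule sum.reindex[OF True, symmetric, unfolded comp_def])
    also have "\<dots> = 0" by (rule u2)
    finally have h0: "hev H p = 0" .
    obtain v where v: "v \<in> S" "u v \<noteq> 0" using u1 by blast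
    then obtain k where k: "k \<in> {0..n*n}" "v = pw k" unfolding S_def by blast
    have "coeff p k = (\<Sum>j\<in>{0..n*n}. if j = k then u (pw j) else 0)"
      unfolding p_def coeff_sum coeff_monom ..
    also have "\<dots> = u (pw k)" using k(1) by (simp only: sum.delta finite_atLeastAtMost if_True)
    finally have "p \<noteq> 0" using v(2) k(2) by auto
    then show ?thesis using h0 by blast
  next
    case False
    then obtain i j where ij: "i \<noteq> j" "pw i = pw j" unfolding inj_on_def by blast
    define p where "p = monom (1::complex) i - monom 1 j"
    have "coeff p i = 1" using ij(1) by (simp add: p_def)
    then have "p \<noteq> 0" by auto
    moreover have "hev H p = 0" using ij(2) by (simp add: p_def hev_diff pw_def)
    ultimately show ?thesis by blast
  qed
qed

lemma spectral:
  assumes "herm H"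
  shows "\<exists>rs. distinct rs \<and> (\<forall>r\<in>set rs. Im r = 0 \<and> eig H r) \<and> hev H (\<Prod>r\<leftarrow>rs. [:-r, 1:]) = 0"
proof -
  have HT: "H \<in> TT" using assms by (simp add: herm_def)
  obtain p where p: "p \<noteq> 0" "hev H p = 0" using annih[OF HT] by blast
  obtain roots where roots: "mset roots = proots p" using ex_mset by blast
  have "p = smult (lead_coeff p) (\<Prod>x\<in>#proots p. [:-x, 1:])"
    by (rule complex_poly_decompose_multiset [symmetric])
  also have "(\<Prod>x\<in>#proots p. [:-x, 1:]) = (\<Prod>x\<leftarrow>roots. [:-x, 1:])"
    by (subst prod_mset_prod_list [symmetric]) (simp add: roots)
  finally have pe: "p = smult (lead_coeff p) (\<Prod>x\<leftarrow>roots. [:-x, 1:])" .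
  have lc: "lead_coeff p \<noteq> 0" using p(1) by simp
  have "tsc (lead_coeff p) (hev H (\<Prod>x\<leftarrow>roots. [:-x, 1:])) = 0"
    using p(2) pe hev_smult by metis
  then have "tsc (inverse (lead_coeff p)) (tsc (lead_coeff p) (hev H (\<Prod>x\<leftarrow>roots. [:-x, 1:]))) = 0"
    by simp
  then have "hev H (\<Prod>x\<leftarrow>roots. [:-x, 1:]) = 0" using lc by (simp add: tsc_tsc)
  then have "hev H (\<Prod>x\<leftarrow>roots. [:-x, 1:]) \<odot> II = 0" by simp
  from reduce[OF assms Id_T this] show ?thesis by simp
qed

lemma hev_agree:
  assumes "H \<in> TT" "distinct rs" "hev H (\<Prod>r\<leftarrow>rs. [:-r, 1:]) = 0"
    "\<forall>r\<in>set rs. poly p r = poly q r"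
  shows "hev H p = hev H q"
proof -
  have "(\<Prod>r\<leftarrow>rs. [:-r, 1:]) dvd (p - q)"
    by (rule prod_dvd_roots[OF assms(2)]) (use assms(4) in auto)
  then obtain k where k: "p - q = (\<Prod>r\<leftarrow>rs. [:-r, 1:]) * k" by (elim dvdE)
  have "hev H p - hev H q = hev H (p - q)" by (simp add: hev_diff)
  also have "\<dots> = 0" unfolding k hev_mult[OF assms(1)] assms(3) by simp
  finally show ?thesis by simp
qed

lemma hev_herm:
  assumes "herm H" "distinct rs" "\<forall>r\<in>set rs. Im r = 0" "hev H (\<Prod>r\<leftarrow>rs. [:-r, 1:]) = 0"
    "\<forall>r\<in>set rs. Im (poly p r) = 0"
  shows "ct (hev H p) = hev H p"
proof -
  have HT: "H \<in> TT" using assms(1) by (simp add: herm_def)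
  have "hev H (map_poly cnj p) = hev H p"
  proof (rule hev_agree[OF HT assms(2,4)], intro ballI)
    fix r assume r: "r \<in> set rs"
    have cr: "cnj r = r" using assms(3) r by (simp add: complex_eq_iff)
    have "poly (map_poly cnj p) r = cnj (poly p (cnj r))"
      using poly_cnj[of p "cnj r"] by simp
    also have "\<dots> = cnj (poly p r)" by (simp only: cr)
    also have "\<dots> = poly p r" using assms(5) r by (simp add: complex_eq_iff)
    finally show "poly (map_poly cnj p) r = poly p r" .
  qed
  then show ?thesis using hev_ct[OF assms(1)] by simp
qed

lemma real_of_Re: "Im r = 0 \<Longrightarrow> complex_of_real (Re r) = r"
  by (simp add: complex_eq_iff)

lemma mv_mul: assumes "i \<in> KK"
  shows "(\<Sum>j\<in>KK. A i j * (\<Sum>k\<in>KK. B j k * v k)) = (\<Sum>k\<in>KK. (A \<odot> B) i k * v k)"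
proof -
  have "(\<Sum>j\<in>KK. A i j * (\<Sum>k\<in>KK. B j k * v k)) = (\<Sum>j\<in>KK. \<Sum>k\<in>KK. A i j * B j k * v k)"
    by (simp add: sum_distrib_left mult.assoc)
  also have "\<dots> = (\<Sum>k\<in>KK. \<Sum>j\<in>KK. A i j * B j k * v k)" by (rule sum.swap)
  also have "\<dots> = (\<Sum>k\<in>KK. (A \<odot> B) i k * v k)"
    by (intro sum.cong refl) (simp add: mul_app[OF assms] sum_distrib_right)
  finally show ?thesis .
qed

lemma mv_Id: "i \<in> KK \<Longrightarrow> (\<Sum>k\<in>KK. II i k * v k) = v i"
proof -
  assume i: "i \<in> KK"
  have "(\<Sum>k\<in>KK. II i k * v k) = (\<Sum>k\<in>KK. if i = k then v k else 0)"
    by (intro sum.cong refl) (auto simp: ident_def i)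
  also have "\<dots> = v i" using i by simp
  finally show ?thesis .
qed

lemma ctQQ_app: assumes "i \<in> KK" "j \<in> KK"
  shows "(ct Q \<odot> Q) i j = (\<Sum>k\<in>KK. cnj (Q k i) * Q k j)"
  unfolding mul_app[OF assms] by (rule sum.cong) (auto simp: ct_app assms)

lemma qf_ctQQ: "qf (ct Q \<odot> Q) v = of_real (nr (\<lambda>k. \<Sum>j\<in>KK. Q k j * v j))"
proof -
  have "qf (ct Q \<odot> Q) v = (\<Sum>i\<in>KK. \<Sum>j\<in>KK. \<Sum>k\<in>KK. cnj (Q k i * v i) * (Q k j * v j))"
    unfolding qf_def
    by (intro sum.cong refl) (simp add: ctQQ_app sum_distrib_left sum_distrib_right mult_ac)
  also have "\<dots> = (\<Sum>i\<in>KK. \<Sum>k\<in>KK. \<Sum>j\<in>KK. cnj (Q k i * v i) * (Q k j * v j))"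
    by (rule sum.cong[OF refl], rule sum.swap)
  also have "\<dots> = (\<Sum>k\<in>KK. \<Sum>i\<in>KK. \<Sum>j\<in>KK. cnj (Q k i * v i) * (Q k j * v j))"
    by (rule sum.swap)
  also have "\<dots> = (\<Sum>k\<in>KK. cnj (\<Sum>i\<in>KK. Q k i * v i) * (\<Sum>j\<in>KK. Q k j * v j))"
    by (intro sum.cong refl) (simp only: cnj_sum sum_product)
  also have "\<dots> = (\<Sum>k\<in>KK. of_real ((cmod (\<Sum>j\<in>KK. Q k j * v j))\<^sup>2))"
    by (intro sum.cong refl) (simp only: complex_norm_square mult.commute)
  finally show ?thesis by (simp add: nr_def)
qed

lemma hpdI: assumes "S \<in> TT" "ct S = S"
  "\<And>v. \<exists>i\<in>KK. v i \<noteq> 0 \<Longrightarrow> Im (qf S v) = 0 \<and> Re (qf S v) > 0"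
  shows "hpd d S"
  using assms unfolding hpd_def qf_def Let_def by blast

lemma sqrt_exists:
  assumes "hpd d N"
  shows "\<exists>S Si. hpd d S \<and> S \<odot> S = N \<and> Si \<in> TT \<and> S \<odot> Si = II \<and> Si \<odot> S = II \<and> ct Si = Si
     \<and> (\<forall>T. hpd d T \<and> T \<odot> T = N \<longrightarrow> T = S)"
proof -
  have hN: "herm N" by (rule hpd_herm[OF assms])
  have NT: "N \<in> TT" using hN by (simp add: herm_def)
  have pN: "posq N" by (rule hpd_posq[OF assms])
  obtain rs where d: "distinct rs" and e: "\<forall>r\<in>set rs. Im r = 0 \<and> eig N r"
    and z: "hev N (\<Prod>r\<leftarrow>rs. [:-r, 1:]) = 0" using spectral[OF hN] by blast
  have pos: "Re r > 0" if "r \<in> set rs" for r using eig_pos[OF pN] e that by blast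
  have re: "Im r = 0" if "r \<in> set rs" for r using e that by blast
  have rr: "\<forall>r\<in>set rs. Im r = 0" using re by blast
  obtain p1 where p1: "\<forall>r\<in>set rs. poly p1 r = of_real (sqrt (Re r))" using interp[OF d, of "\<lambda>r. of_real (sqrt (Re r))"] by blast
  obtain p2 where p2: "\<forall>r\<in>set rs. poly p2 r = of_real (sqrt (sqrt (Re r)))" using interp[OF d, of "\<lambda>r. of_real (sqrt (sqrt (Re r)))"] by blast
  obtain p3 where p3: "\<forall>r\<in>set rs. poly p3 r = of_real (1 / sqrt (sqrt (Re r)))" using interp[OF d, of "\<lambda>r. of_real (1 / sqrt (sqrt (Re r)))"] by blast
  obtain p4 where p4: "\<forall>r\<in>set rs. poly p4 r = of_real (1 / sqrt (Re r))" using interp[OF d, of "\<lambda>r. of_real (1 / sqrt (Re r))"] by blast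
  define S where "S = hev N p1"
  define Q where "Q = hev N p2"
  define Q' where "Q' = hev N p3"
  define Si where "Si = hev N p4"
  note ag = hev_agree[OF NT d z]
  have SS: "S \<odot> S = N"
  proof -
    have "S \<odot> S = hev N (p1 * p1)" unfolding S_def hev_mult[OF NT] ..
    also have "\<dots> = hev N [:0, 1:]"
    proof (rule ag, intro ballI)
      fix r assume r: "r \<in> set rs"
      have "poly (p1 * p1) r = of_real (Re r)" using p1 r pos[OF r] by (simp flip: of_real_mult)
      also have "\<dots> = r" using real_of_Re[OF re[OF r]] .
      finally show "poly (p1 * p1) r = poly [:0, 1:] r" by simp
    qed
    also have "\<dots> = N" by (rule hev_X[OF NT])
    finally show ?thesis .
  qed
  have QQ: "Q \<odot> Q = S"
  proof -
    have "Q \<odot> Q = hev N (p2 * p2)" unfolding Q_def hev_mult[OF NT] ..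
    also have "\<dots> = S" unfolding S_def
    proof (rule ag, intro ballI)
      fix r assume r: "r \<in> set rs"
      show "poly (p2 * p2) r = poly p1 r" using p1 p2 r pos[OF r]
        by (simp flip: of_real_mult add: abs_of_nonneg)
    qed
    finally show ?thesis .
  qed
  have QQ': "Q' \<odot> Q = II"
  proof -
    have "Q' \<odot> Q = hev N (p3 * p2)" unfolding Q_def Q'_def hev_mult[OF NT] ..
    also have "\<dots> = hev N 1"
    proof (rule ag, intro ballI)
      fix r assume r: "r \<in> set rs"
      have "sqrt (sqrt (Re r)) > 0" using pos[OF r] by simp
      then have "poly (p3 * p2) r = 1" using p2 p3 r by (simp flip: of_real_mult)
      then show "poly (p3 * p2) r = poly 1 r" by simp
    qed
    also have "\<dots> = II" by (rule hev_one)
    finally show ?thesis .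
  qed
  have SSi: "S \<odot> Si = II"
  proof -
    have "S \<odot> Si = hev N (p1 * p4)" unfolding S_def Si_def hev_mult[OF NT] ..
    also have "\<dots> = hev N 1"
    proof (rule ag, intro ballI)
      fix r assume r: "r \<in> set rs"
      have "sqrt (Re r) > 0" using pos[OF r] by simp
      then have "poly (p1 * p4) r = 1" using p1 p4 r by (simp flip: of_real_mult)
      then show "poly (p1 * p4) r = poly 1 r" by simp
    qed
    also have "\<dots> = II" by (rule hev_one)
    finally show ?thesis .
  qed
  have SiS: "Si \<odot> S = II" using SSi unfolding S_def Si_def by (simp add: hev_comm2[OF NT])
  have hS: "ct S = S" unfolding S_def
    by (rule hev_herm[OF hN d rr z]) (use p1 in simp)
  have hQ: "ct Q = Q" unfolding Q_def
    by (rule hev_herm[OF hN d rr z]) (use p2 in simp)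
  have hSi: "ct Si = Si" unfolding Si_def
    by (rule hev_herm[OF hN d rr z]) (use p4 in simp)
  have QT: "Q \<in> TT" "Q' \<in> TT" "S \<in> TT" "Si \<in> TT" by (auto simp: Q_def Q'_def S_def Si_def)
  have hpdS: "hpd d S"
  proof (rule hpdI[OF QT(3) hS])
    fix v :: "nat list \<Rightarrow> complex" assume ne: "\<exists>i\<in>KK. v i \<noteq> 0"
    define w where "w = (\<lambda>k. \<Sum>j\<in>KK. Q k j * v j)"
    have q: "qf S v = of_real (nr w)" unfolding w_def
      using qf_ctQQ[of Q v] QQ hQ by simp
    have "\<exists>i\<in>KK. w i \<noteq> 0"
    proof (rule ccontr)
      assume "\<not> (\<exists>i\<in>KK. w i \<noteq> 0)"
      then have w0: "\<forall>i\<in>KK. w i = 0" by blast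
      have "\<forall>i\<in>KK. v i = 0"
      proof
        fix i assume i: "i \<in> KK"
        have "v i = (\<Sum>k\<in>KK. (Q' \<odot> Q) i k * v k)" using mv_Id[OF i] QQ' by simp
        also have "\<dots> = (\<Sum>j\<in>KK. Q' i j * w j)" unfolding w_def mv_mul[OF i] ..
        also have "\<dots> = 0" using w0 by simp
        finally show "v i = 0" .
      qed
      then show False using ne by blast
    qed
    then have "nr w > 0" by (rule nr_pos)
    then show "Im (qf S v) = 0 \<and> Re (qf S v) > 0" using q by simp
  qed
  have uniq: "T = S" if T: "hpd d T" "T \<odot> T = N" for T
  proof -
    have TT: "T \<in> TT" using T(1) by (simp add: hpd_def)
    have "T \<odot> N = N \<odot> T" using T(2) by (metis mul_assoc)
    then have c: "T \<odot> S = S \<odot> T" unfolding S_def by (rule hev_comm[OF NT TT])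
    have "(T + S) \<odot> (T - S) = T \<odot> T - T \<odot> S + (S \<odot> T - S \<odot> S)"
      by (simp add: mul_add_left mul_diff_right)
    also have "\<dots> = 0" using c T(2) SS by simp
    finally have eq: "(T + S) \<odot> (T - S) = 0" .
    have pos: "posq (T + S)" by (intro posq_add hpd_posq T(1) hpdS)
    have "T - S = 0" by (rule injq_inj[OF posq_injq[OF pos] diff_T[OF TT QT(3)] eq])
    then show ?thesis by simp
  qed
  show ?thesis using hpdS SS QT(4) SSi SiS hSi uniq by blast
qed

definition pen :: "tensor \<Rightarrow> tensor \<Rightarrow> bool" where
  "pen A X \<longleftrightarrow> X \<in> TT \<and> (A \<odot> X) \<odot> A = A \<and> (X \<odot> A) \<odot> X = X \<and>
     ct (A \<odot> X) = A \<odot> X \<and> ct (X \<odot> A) = X \<odot> A"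

lemma mp_pen_iff: "mp d A = (THE X. pen A X)"
  unfolding mp_def wmp_def pen_def by simp

lemma pen_unique: assumes A: "A \<in> TT" and pX: "pen A X" and pY: "pen A Y" shows "X = Y"
proof -
  have XT: "X \<in> TT" and pX1: "A \<odot> (X \<odot> A) = A" and pX2: "X \<odot> (A \<odot> X) = X"
    and cX1: "ct X \<odot> ct A = A \<odot> X" and cX2: "ct A \<odot> ct X = X \<odot> A"
    using pX unfolding pen_def by (auto simp: mul_assoc ct_mul)
  have YT: "Y \<in> TT" and pY1: "A \<odot> (Y \<odot> A) = A" and pY2: "Y \<odot> (A \<odot> Y) = Y"
    and cY1: "ct Y \<odot> ct A = A \<odot> Y" and cY2: "ct A \<odot> ct Y = Y \<odot> A"
    using pY unfolding pen_def by (auto simp: mul_assoc ct_mul)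
  have cA1: "ct A \<odot> (A \<odot> Y) = ct A"
  proof -
    have "ct A = ct (A \<odot> (Y \<odot> A))" using pY1 by simp
    also have "\<dots> = (ct A \<odot> ct Y) \<odot> ct A" by (simp add: ct_mul)
    also have "\<dots> = ct A \<odot> (ct Y \<odot> ct A)" by (simp only: mul_assoc)
    also have "\<dots> = ct A \<odot> (A \<odot> Y)" by (simp only: cY1)
    finally show ?thesis by simp
  qed
  have cA2: "(X \<odot> A) \<odot> ct A = ct A"
  proof -
    have "ct A = ct (A \<odot> (X \<odot> A))" using pX1 by simp
    also have "\<dots> = (ct A \<odot> ct X) \<odot> ct A" by (simp add: ct_mul)
    also have "\<dots> = (X \<odot> A) \<odot> ct A" by (simp only: cX2)
    finally show ?thesis by simp
  qed
  have "X = X \<odot> (ct X \<odot> ct A)" using pX2 cX1 by simp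
  also have "\<dots> = X \<odot> (ct X \<odot> (ct A \<odot> (A \<odot> Y)))" by (simp only: cA1)
  also have "\<dots> = X \<odot> ((ct X \<odot> ct A) \<odot> (A \<odot> Y))" by (simp only: mul_assoc)
  also have "\<dots> = X \<odot> ((A \<odot> X) \<odot> (A \<odot> Y))" by (simp only: cX1)
  also have "\<dots> = (X \<odot> (A \<odot> X)) \<odot> (A \<odot> Y)" by (simp only: mul_assoc)
  also have "\<dots> = X \<odot> (A \<odot> Y)" by (simp only: pX2)
  finally have X1: "X = X \<odot> (A \<odot> Y)" .
  have "Y = (ct A \<odot> ct Y) \<odot> Y" using pY2 cY2 by (simp add: mul_assoc)
  also have "\<dots> = (((X \<odot> A) \<odot> ct A) \<odot> ct Y) \<odot> Y" by (simp only: cA2)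
  also have "\<dots> = (X \<odot> A) \<odot> ((ct A \<odot> ct Y) \<odot> Y)" by (simp only: mul_assoc)
  also have "\<dots> = (X \<odot> A) \<odot> ((Y \<odot> A) \<odot> Y)" by (simp only: cY2)
  also have "\<dots> = (X \<odot> A) \<odot> Y" using pY2 by (simp only: mul_assoc)
  also have "\<dots> = X \<odot> (A \<odot> Y)" by (simp only: mul_assoc)
  finally have Y1: "Y = X \<odot> (A \<odot> Y)" .
  show ?thesis using X1 Y1 by simp
qed

lemma pen_sym: "A \<in> TT \<Longrightarrow> pen A X \<Longrightarrow> pen X A"
  unfolding pen_def by auto

lemma pen_exists: assumes A: "A \<in> TT"
  shows "\<exists>X. pen A X \<and> (ct A \<odot> A = A \<odot> ct A \<longrightarrow> X \<odot> ct X = ct X \<odot> X)"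
proof -
  define B where "B = ct A \<odot> A"
  have BT: "B \<in> TT" by (simp add: B_def)
  have hB: "herm B" unfolding herm_def B_def using A by (simp add: ct_mul)
  obtain rs where d: "distinct rs" and e: "\<forall>r\<in>set rs. Im r = 0 \<and> eig B r"
    and z: "hev B (\<Prod>r\<leftarrow>rs. [:-r, 1:]) = 0" using spectral[OF hB] by blast
  have rr: "\<forall>r\<in>set rs. Im r = 0" using e by blast
  define g where "g r = (if r = 0 then 0 else 1 / r)" for r :: complex
  obtain p where p: "\<forall>r\<in>set rs. poly p r = g r" using interp[OF d, of g] by blast
  define Bd where "Bd = hev B p"
  have BdT: "Bd \<in> TT" by (simp add: Bd_def)
  note ag = hev_agree[OF BT d z]
  have hBd: "ct Bd = Bd" unfolding Bd_def
  proof (rule hev_herm[OF hB d rr z], intro ballI)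
    fix r assume r: "r \<in> set rs"
    have "Im r = 0" using rr r by blast
    then show "Im (poly p r) = 0" using p r by (simp add: g_def Im_divide)
  qed
  have BX: "B = hev B [:0, 1:]" by (simp add: hev_X[OF BT])
  have BBdB: "B \<odot> (Bd \<odot> B) = B"
  proof -
    have "B \<odot> (Bd \<odot> B) = hev B ([:0, 1:] * (p * [:0, 1:]))"
      unfolding hev_mult[OF BT] Bd_def BX[symmetric] ..
    also have "\<dots> = hev B [:0, 1:]"
      by (rule ag) (use p in \<open>auto simp: g_def\<close>)
    finally show ?thesis using BX by simp
  qed
  have BdBBd: "Bd \<odot> (B \<odot> Bd) = Bd"
  proof -
    have "Bd \<odot> (B \<odot> Bd) = hev B (p * ([:0, 1:] * p))"
      unfolding hev_mult[OF BT] Bd_def BX[symmetric] ..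
    also have "\<dots> = hev B p"
      by (rule ag) (use p in \<open>auto simp: g_def\<close>)
    finally show ?thesis unfolding Bd_def .
  qed
  have cBBd: "B \<odot> Bd = Bd \<odot> B" unfolding Bd_def by (rule hev_commH[OF BT])
  define Q where "Q = II - Bd \<odot> B"
  have QT: "Q \<in> TT" by (simp add: Q_def)
  have BQ: "B \<odot> Q = 0" unfolding Q_def using BBdB BT by (simp add: mul_diff_right mul_assoc)
  have AQ: "A \<odot> Q = 0"
  proof (rule ctM_M_zero)
    have "ct (A \<odot> Q) \<odot> (A \<odot> Q) = ct Q \<odot> (B \<odot> Q)" by (simp add: ct_mul B_def mul_assoc)
    then show "ct (A \<odot> Q) \<odot> (A \<odot> Q) = 0" using BQ by simp
  qed simp
  have ABdB: "A \<odot> (Bd \<odot> B) = A"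
  proof -
    have "A - A \<odot> (Bd \<odot> B) = A \<odot> Q" using A by (simp add: Q_def mul_diff_right)
    then show ?thesis using AQ by simp
  qed
  define X where "X = Bd \<odot> ct A"
  have pX: "pen A X" unfolding pen_def
  proof (intro conjI)
    show "X \<in> TT" by (simp add: X_def)
    show "(A \<odot> X) \<odot> A = A" using ABdB by (simp add: X_def mul_assoc B_def)
    show "(X \<odot> A) \<odot> X = X"
    proof -
      have "(X \<odot> A) \<odot> X = Bd \<odot> (B \<odot> Bd) \<odot> ct A" by (simp add: X_def mul_assoc B_def)
      then show ?thesis using BdBBd by (simp add: X_def)
    qed
    show "ct (A \<odot> X) = A \<odot> X" using A hBd by (simp add: X_def ct_mul mul_assoc)
    show "ct (X \<odot> A) = X \<odot> A"
    proof -
      have "X \<odot> A = Bd \<odot> B" by (simp add: X_def B_def mul_assoc)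
      moreover have "ct (Bd \<odot> B) = Bd \<odot> B" using hB hBd cBBd by (simp add: ct_mul herm_def)
      ultimately show ?thesis by simp
    qed
  qed
  have "X \<odot> ct X = ct X \<odot> X" if nA: "ct A \<odot> A = A \<odot> ct A"
  proof -
    have c1: "A \<odot> B = B \<odot> A" unfolding B_def by (simp only: mul_assoc[symmetric] nA[symmetric])
    have c2: "ct A \<odot> B = B \<odot> ct A"
    proof -
      have "ct A \<odot> (ct A \<odot> A) = ct A \<odot> (A \<odot> ct A)" using nA by simp
      also have "\<dots> = (ct A \<odot> A) \<odot> ct A" by (simp only: mul_assoc)
      finally show ?thesis unfolding B_def .
    qed
    have cA: "A \<odot> Bd = Bd \<odot> A" unfolding Bd_def by (rule hev_comm[OF BT A c1])
    have cAc: "ct A \<odot> Bd = Bd \<odot> ct A" unfolding Bd_def by (rule hev_comm[OF BT ct_T c2])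
    have ctX: "ct X = A \<odot> Bd" using A hBd by (simp add: X_def ct_mul)
    have "X \<odot> ct X = Bd \<odot> (B \<odot> Bd)" unfolding ctX unfolding X_def B_def by (simp only: mul_assoc)
    also have "\<dots> = Bd" by (rule BdBBd)
    finally have L: "X \<odot> ct X = Bd" .
    have "ct X \<odot> X = A \<odot> (Bd \<odot> (Bd \<odot> ct A))" unfolding ctX unfolding X_def by (simp only: mul_assoc)
    also have "\<dots> = A \<odot> (Bd \<odot> (ct A \<odot> Bd))" by (simp only: cAc)
    also have "\<dots> = (A \<odot> Bd) \<odot> (ct A \<odot> Bd)" by (simp only: mul_assoc)
    also have "\<dots> = (Bd \<odot> A) \<odot> (ct A \<odot> Bd)" by (simp only: cA)
    also have "\<dots> = Bd \<odot> ((A \<odot> ct A) \<odot> Bd)" by (simp only: mul_assoc)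
    also have "\<dots> = Bd \<odot> (B \<odot> Bd)" by (simp only: nA[symmetric] B_def)
    also have "\<dots> = Bd" by (rule BdBBd)
    finally show ?thesis using L by simp
  qed
  then show ?thesis using pX by blast
qed

lemma mp_eq: assumes "A \<in> TT" "pen A X" shows "mp d A = X"
  unfolding mp_pen_iff using assms pen_unique by blast

lemma mp_pen: assumes "A \<in> TT" shows "pen A (mp d A)"
  using pen_exists[OF assms] mp_eq[OF assms] by metis

lemma normal_mp_imp: assumes "A \<in> TT" "ct A \<odot> A = A \<odot> ct A"
  shows "mp d A \<odot> ct (mp d A) = ct (mp d A) \<odot> mp d A"
  using pen_exists[OF assms(1)] mp_eq[OF assms(1)] assms(2) by metis

lemma normal_mp: assumes "A \<in> TT"
  shows "(A \<odot> ct A = ct A \<odot> A) \<longleftrightarrow> (mp d A \<odot> ct (mp d A) = ct (mp d A) \<odot> mp d A)"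
proof
  assume "A \<odot> ct A = ct A \<odot> A"
  then show "mp d A \<odot> ct (mp d A) = ct (mp d A) \<odot> mp d A" using normal_mp_imp[OF assms] by simp
next
  assume n: "mp d A \<odot> ct (mp d A) = ct (mp d A) \<odot> mp d A"
  have pZ: "pen A (mp d A)" by (rule mp_pen[OF assms])
  have ZT: "mp d A \<in> TT" using pZ by (simp add: pen_def)
  have "mp d (mp d A) = A" by (rule mp_eq[OF ZT pen_sym[OF assms pZ]])
  moreover have "mp d (mp d A) \<odot> ct (mp d (mp d A)) = ct (mp d (mp d A)) \<odot> mp d (mp d A)"
    using normal_mp_imp[OF ZT] n by simp
  ultimately show "A \<odot> ct A = ct A \<odot> A" by simp
qed

lemma tinv_eq: assumes "X \<in> TT" "A \<odot> X = II" "X \<odot> A = II" shows "tinv d A = X"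
  unfolding tinv_def
proof (rule the_equality)
  show "X \<in> TT \<and> A \<odot> X = II \<and> X \<odot> A = II" using assms by blast
next
  fix Y assume Y: "Y \<in> TT \<and> A \<odot> Y = II \<and> Y \<odot> A = II"
  have "Y = Y \<odot> (A \<odot> X)" using Y assms(2) by simp
  also have "\<dots> = (Y \<odot> A) \<odot> X" by (simp only: mul_assoc)
  also have "\<dots> = X" using Y assms(1) by simp
  finally show "Y = X" .
qed

definition ip :: "tensor \<Rightarrow> tensor \<Rightarrow> bool" where
  "ip S Si \<longleftrightarrow> S \<in> TT \<and> Si \<in> TT \<and> S \<odot> Si = II \<and> Si \<odot> S = II"

lemma ip_sym: "ip S Si \<Longrightarrow> ip Si S"
  unfolding ip_def by auto

lemma ip_left: "ip S Si \<Longrightarrow> Z \<in> TT \<Longrightarrow> Si \<odot> (S \<odot> Z) = Z"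
  unfolding ip_def by (simp add: mul_assoc[symmetric])

lemma ip_cancel: assumes "ip S Si" "Y \<in> TT" shows "(Si \<odot> ((S \<odot> Y) \<odot> Si)) \<odot> S = Y"
proof -
  have "(Si \<odot> ((S \<odot> Y) \<odot> Si)) \<odot> S = Si \<odot> (S \<odot> (Y \<odot> (Si \<odot> S)))" by (simp only: mul_assoc)
  also have "\<dots> = Y" using assms ip_left[OF assms(1)] by (simp add: ip_def)
  finally show ?thesis .
qed

lemma ip_mul: assumes "ip S Si" "Z \<in> TT"
  shows "((S \<odot> Y) \<odot> Si) \<odot> ((S \<odot> Z) \<odot> Si) = (S \<odot> (Y \<odot> Z)) \<odot> Si"
proof -
  have "((S \<odot> Y) \<odot> Si) \<odot> ((S \<odot> Z) \<odot> Si) = S \<odot> (Y \<odot> (Si \<odot> (S \<odot> (Z \<odot> Si))))" by (simp only: mul_assoc)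
  also have "\<dots> = S \<odot> (Y \<odot> (Z \<odot> Si))" using ip_left[OF assms(1)] by simp
  finally show ?thesis by (simp only: mul_assoc)
qed

lemma ip_inj: assumes "ip S Si" "Y \<in> TT" "Z \<in> TT"
  shows "((S \<odot> Y) \<odot> Si = (S \<odot> Z) \<odot> Si) \<longleftrightarrow> Y = Z"
  using ip_cancel[OF assms(1) assms(2)] ip_cancel[OF assms(1) assms(3)] by metis

lemma sandwich: assumes "ip S Si" "Y \<in> TT" "Z \<in> TT"
  shows "Y = Z \<longleftrightarrow> S \<odot> (Y \<odot> S) = S \<odot> (Z \<odot> S)"
proof
  assume "S \<odot> (Y \<odot> S) = S \<odot> (Z \<odot> S)"
  then have "(Si \<odot> (S \<odot> (Y \<odot> S))) \<odot> Si = (Si \<odot> (S \<odot> (Z \<odot> S))) \<odot> Si" by simp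
  moreover have "(Si \<odot> (S \<odot> (W \<odot> S))) \<odot> Si = W" if "W \<in> TT" for W
  proof -
    have "(Si \<odot> (S \<odot> (W \<odot> S))) \<odot> Si = Si \<odot> (S \<odot> (W \<odot> (S \<odot> Si)))" by (simp only: mul_assoc)
    also have "\<dots> = W" using assms(1) that ip_left[OF assms(1)] by (simp add: ip_def)
    finally show ?thesis .
  qed
  ultimately show "Y = Z" using assms(2,3) by metis
qed simp

context
  fixes S Si N :: tensor
  assumes ipS: "ip S Si" and cS: "ct S = S" and cSi: "ct Si = Si" and NS: "N = S \<odot> S"
begin

lemma ST: "S \<in> TT" and SiT: "Si \<in> TT" and SSi: "S \<odot> Si = II" and SiS: "Si \<odot> S = II"
  using ipS by (auto simp: ip_def)

lemma tinvN: "tinv d N = Si \<odot> Si"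
proof (rule tinv_eq)
  show "N \<odot> (Si \<odot> Si) = II"
    unfolding NS using ST SiT SSi by (simp add: mul_assoc ip_left[OF ip_sym[OF ipS]])
  show "(Si \<odot> Si) \<odot> N = II"
    unfolding NS using ST SiT SiS by (simp add: mul_assoc ip_left[OF ipS])
qed simp

lemma wct_ucj: assumes "Y \<in> TT"
  shows "wctrans d N ((Si \<odot> Y) \<odot> S) = (Si \<odot> ct Y) \<odot> S"
proof -
  have "wctrans d N ((Si \<odot> Y) \<odot> S) = ((Si \<odot> Si) \<odot> ((S \<odot> ct Y) \<odot> Si)) \<odot> (S \<odot> S)"
    unfolding wctrans_def tinvN unfolding NS by (simp add: ct_mul cS cSi mul_assoc)
  also have "\<dots> = Si \<odot> (Si \<odot> (S \<odot> (ct Y \<odot> (Si \<odot> (S \<odot> S)))))" by (simp only: mul_assoc)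
  also have "\<dots> = Si \<odot> (ct Y \<odot> S)" using ST by (simp add: ip_left[OF ipS])
  finally show ?thesis by (simp only: mul_assoc)
qed

lemma herm_cond: assumes "V \<in> TT"
  shows "ct (N \<odot> V) = N \<odot> V \<longleftrightarrow> ct ((S \<odot> V) \<odot> Si) = (S \<odot> V) \<odot> Si"
proof -
  have l: "ct (N \<odot> V) = ct V \<odot> N" unfolding NS by (simp add: ct_mul cS)
  have r: "ct ((S \<odot> V) \<odot> Si) = (Si \<odot> ct V) \<odot> S" by (simp add: ct_mul cS cSi mul_assoc)
  have "(Si \<odot> ct V) \<odot> S = (S \<odot> V) \<odot> Si \<longleftrightarrow>
        S \<odot> (((Si \<odot> ct V) \<odot> S) \<odot> S) = S \<odot> (((S \<odot> V) \<odot> Si) \<odot> S)"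
    by (rule sandwich[OF ipS]) auto
  also have "S \<odot> (((Si \<odot> ct V) \<odot> S) \<odot> S) = ct V \<odot> N"
    unfolding NS using ip_left[OF ip_sym[OF ipS]] by (simp add: mul_assoc)
  also have "S \<odot> (((S \<odot> V) \<odot> Si) \<odot> S) = N \<odot> V"
    unfolding NS using assms SiS by (simp add: mul_assoc)
  finally show ?thesis using l r by auto
qed

lemma penw_iff: assumes A: "A \<in> TT" and X: "X \<in> TT"
  shows "(X \<in> TT \<and> (A \<odot> X) \<odot> A = A \<and> (X \<odot> A) \<odot> X = X \<and>
          ct (N \<odot> (A \<odot> X)) = N \<odot> (A \<odot> X) \<and> ct (N \<odot> (X \<odot> A)) = N \<odot> (X \<odot> A))
     \<longleftrightarrow> pen ((S \<odot> A) \<odot> Si) ((S \<odot> X) \<odot> Si)"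
proof -
  have m: "((S \<odot> Y) \<odot> Si) \<odot> ((S \<odot> Z) \<odot> Si) = (S \<odot> (Y \<odot> Z)) \<odot> Si" if "Z \<in> TT" for Y Z
    by (rule ip_mul[OF ipS that])
  have a: "(S \<odot> (Y \<odot> Z)) \<odot> Si = (S \<odot> Y \<odot> Z) \<odot> Si" for Y Z by (simp only: mul_assoc)
  have e1: "(((S \<odot> A) \<odot> Si) \<odot> ((S \<odot> X) \<odot> Si)) \<odot> ((S \<odot> A) \<odot> Si) = (S \<odot> ((A \<odot> X) \<odot> A)) \<odot> Si"
    using A X by (simp add: m)
  have e2: "(((S \<odot> X) \<odot> Si) \<odot> ((S \<odot> A) \<odot> Si)) \<odot> ((S \<odot> X) \<odot> Si) = (S \<odot> ((X \<odot> A) \<odot> X)) \<odot> Si"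
    using A X by (simp add: m)
  have e3: "((S \<odot> A) \<odot> Si) \<odot> ((S \<odot> X) \<odot> Si) = (S \<odot> (A \<odot> X)) \<odot> Si" using X by (simp add: m)
  have e4: "((S \<odot> X) \<odot> Si) \<odot> ((S \<odot> A) \<odot> Si) = (S \<odot> (X \<odot> A)) \<odot> Si" using A by (simp add: m)
  show ?thesis
    unfolding pen_def e1 e2 unfolding e3 e4 ip_inj[OF ipS mul_T A] ip_inj[OF ipS mul_T X]
      herm_cond[OF mul_T] using X by simp
qed

lemma wmp_eq: assumes A: "A \<in> TT"
  shows "wmp d N N A = (Si \<odot> mp d ((S \<odot> A) \<odot> Si)) \<odot> S"
  unfolding wmp_def
proof (rule the_equality)
  define Z where "Z = mp d ((S \<odot> A) \<odot> Si)"
  have pZ: "pen ((S \<odot> A) \<odot> Si) Z" unfolding Z_def by (rule mp_pen) simp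
  have ZT: "Z \<in> TT" using pZ by (simp add: pen_def)
  have cZ: "(S \<odot> ((Si \<odot> Z) \<odot> S)) \<odot> Si = Z" by (rule ip_cancel[OF ip_sym[OF ipS] ZT])
  show "(Si \<odot> Z) \<odot> S \<in> TT \<and> (A \<odot> ((Si \<odot> Z) \<odot> S)) \<odot> A = A \<and>
      (((Si \<odot> Z) \<odot> S) \<odot> A) \<odot> ((Si \<odot> Z) \<odot> S) = (Si \<odot> Z) \<odot> S \<and>
      ct (N \<odot> (A \<odot> ((Si \<odot> Z) \<odot> S))) = N \<odot> (A \<odot> ((Si \<odot> Z) \<odot> S)) \<and>
      ct (N \<odot> (((Si \<odot> Z) \<odot> S) \<odot> A)) = N \<odot> (((Si \<odot> Z) \<odot> S) \<odot> A)"
    unfolding penw_iff[OF A mul_T] cZ by (rule pZ)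
  fix X assume h: "X \<in> TT \<and> (A \<odot> X) \<odot> A = A \<and> (X \<odot> A) \<odot> X = X \<and>
      ct (N \<odot> (A \<odot> X)) = N \<odot> (A \<odot> X) \<and> ct (N \<odot> (X \<odot> A)) = N \<odot> (X \<odot> A)"
  then have XT: "X \<in> TT" by blast
  have "pen ((S \<odot> A) \<odot> Si) ((S \<odot> X) \<odot> Si)" using h unfolding penw_iff[OF A XT] .
  then have "(S \<odot> X) \<odot> Si = Z" using pen_unique[OF mul_T pZ] by simp
  then show "X = (Si \<odot> Z) \<odot> S" using ip_cancel[OF ipS XT] by simp
qed

end

lemma main:
  assumes A: "A \<in> TT" and hN: "hpd d N"
  defines "At \<equiv> (tsqrt d N \<odot> A) \<odot> tsqrt_inv d N"
  shows "(A = wctrans d N A \<longleftrightarrow> At = ct At)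
    \<and> (A \<odot> (wctrans d N A) = (wctrans d N A) \<odot> A \<longleftrightarrow> At \<odot> (ct At) = (ct At) \<odot> At)
    \<and> ((wmp d N N A) \<odot> (wctrans d N (wmp d N N A)) = (wctrans d N (wmp d N N A)) \<odot> (wmp d N N A)
         \<longleftrightarrow> (mp d At) \<odot> (ct (mp d At)) = (ct (mp d At)) \<odot> (mp d At))
    \<and> (A \<odot> (wctrans d N A) = (wctrans d N A) \<odot> A
         \<longleftrightarrow> (wmp d N N A) \<odot> (wctrans d N (wmp d N N A)) = (wctrans d N (wmp d N N A)) \<odot> (wmp d N N A))"
proof -
  obtain S Si where hS: "hpd d S" and SS: "S \<odot> S = N" and SiT: "Si \<in> TT"
    and SSi: "S \<odot> Si = II" and SiS: "Si \<odot> S = II" and cSi: "ct Si = Si"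
    and uniq: "\<forall>T. hpd d T \<and> T \<odot> T = N \<longrightarrow> T = S"
    using sqrt_exists[OF hN] by blast
  have ST: "S \<in> TT" and cS: "ct S = S" using hS by (auto simp: hpd_def)
  have ipS: "ip S Si" using ST SiT SSi SiS by (simp add: ip_def)
  have ts: "tsqrt d N = S" unfolding tsqrt_def
    by (rule the_equality) (use hS SS uniq in blast)+
  have tsi: "tsqrt_inv d N = Si" unfolding tsqrt_inv_def ts by (rule tinv_eq[OF SiT SSi SiS])
  have NS: "N = S \<odot> S" using SS by simp
  note W = wct_ucj[OF ipS cS cSi NS]
  have AtT: "At \<in> TT" by (simp add: At_def)
  have At: "At = (S \<odot> A) \<odot> Si" by (simp add: At_def ts tsi)
  have Aeq: "A = (Si \<odot> At) \<odot> S" unfolding At by (rule ip_cancel[OF ipS A, symmetric])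
  let ?u = "\<lambda>Y. (Si \<odot> Y) \<odot> S"
  have uinj: "?u Y = ?u Z \<longleftrightarrow> Y = Z" if "Y \<in> TT" "Z \<in> TT" for Y Z
    by (rule ip_inj[OF ip_sym[OF ipS] that])
  have umul: "?u Y \<odot> ?u Z = ?u (Y \<odot> Z)" if "Z \<in> TT" for Y Z
    by (rule ip_mul[OF ip_sym[OF ipS] that])
  have wA: "wctrans d N A = ?u (ct At)" by (subst Aeq, rule W[OF AtT])
  define Z where "Z = mp d At"
  have ZT: "Z \<in> TT" using mp_pen[OF AtT] by (simp add: pen_def Z_def)
  have wm: "wmp d N N A = ?u Z" unfolding Z_def At by (rule wmp_eq[OF ipS cS cSi NS A])
  have wZ: "wctrans d N (?u Z) = ?u (ct Z)" by (rule W[OF ZT])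
  have i1: "A = wctrans d N A \<longleftrightarrow> At = ct At"
    unfolding wA by (subst Aeq, rule uinj[OF AtT ct_T])
  have i2: "A \<odot> (wctrans d N A) = (wctrans d N A) \<odot> A \<longleftrightarrow> At \<odot> (ct At) = (ct At) \<odot> At"
    unfolding wA by (subst (1 2) Aeq, simp only: umul[OF ct_T] umul[OF AtT] uinj[OF mul_T mul_T])
  have i3: "(wmp d N N A) \<odot> (wctrans d N (wmp d N N A)) = (wctrans d N (wmp d N N A)) \<odot> (wmp d N N A)
         \<longleftrightarrow> Z \<odot> (ct Z) = (ct Z) \<odot> Z"
    unfolding wm wZ by (simp only: umul[OF ct_T] umul[OF ZT] uinj[OF mul_T mul_T])
  have i4: "At \<odot> ct At = ct At \<odot> At \<longleftrightarrow> Z \<odot> ct Z = ct Z \<odot> Z"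
    unfolding Z_def by (rule normal_mp[OF AtT])
  show ?thesis using i1 i2 i3 i4 unfolding Z_def by blast
qed

end


theorem theorem4p4:
  fixes dims :: "nat list" and A N :: tensor
  assumes "A \<in> tensors dims" and "hpd dims N"
  defines "At \<equiv> einstein dims (einstein dims (tsqrt dims N) A) (tsqrt_inv dims N)"
  shows "(A = wctrans dims N A \<longleftrightarrow> At = ctrans dims At)
    \<and> (einstein dims A (wctrans dims N A) = einstein dims (wctrans dims N A) A
         \<longleftrightarrow> einstein dims At (ctrans dims At) = einstein dims (ctrans dims At) At)
    \<and> (einstein dims (wmp dims N N A) (wctrans dims N (wmp dims N N A))
           = einstein dims (wctrans dims N (wmp dims N N A)) (wmp dims N N A)
         \<longleftrightarrow> einstein dims (mp dims At) (ctrans dims (mp dims At))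
           = einstein dims (ctrans dims (mp dims At)) (mp dims At))
    \<and> (einstein dims A (wctrans dims N A) = einstein dims (wctrans dims N A) A
         \<longleftrightarrow> einstein dims (wmp dims N N A) (wctrans dims N (wmp dims N N A))
           = einstein dims (wctrans dims N (wmp dims N N A)) (wmp dims N N A))"
  unfolding At_def by (rule main[OF assms(1) assms(2)])

end
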